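(* Let $(H_i)_{i=0}^\infty = (2^{\alpha_i}3^{\beta_i})_{i=0}^\infty$ be the increasing enumeration of $\mathcal{H}=\{2^\alpha3^\beta : \alpha,\beta\in\mathbb{N}_0\}$, and define $f\colon\mathbb{N}_0\to\{+1,-1\}$ by $f(0)=+1$ and $f(n)=(-1)^{\alpha_i+\beta_i}$ for $n\in\{H_i,H_i+1,\dots,H_{i+1}-1\}$, $i\in\mathbb{N}_0$. Then there is no periodic sequence $\tilde f\colon\mathbb{N}_0\to\{+1,-1\}$ such that $f(n)=\tilde f(n)$ for almost all $n\in\mathbb{N}_0$.
   Context: $\mathbb{N}_0=\{0,1,2,\dots\}$. A property holds for almost all $n\in\mathbb{N}_0$ if the set of $n$ where it fails has upper density $\limsup_{N\to\infty}|\cdot\cap\{0,\dots,N-1\}|/N$ equal to $0$. *)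

theory Defs
  imports "HOL-Analysis.Analysis" "HOL-Computational_Algebra.Primes"
begin

definition hamming23 :: "nat set" where
  "hamming23 = {2 ^ a * 3 ^ b | a b. True}"

definition H :: "nat \<Rightarrow> nat" where
  "H i = enumerate hamming23 i"

definition alphaH :: "nat \<Rightarrow> nat" where
  "alphaH i = multiplicity (2::nat) (H i)"

definition betaH :: "nat \<Rightarrow> nat" where
  "betaH i = multiplicity (3::nat) (H i)"

definition f :: "nat \<Rightarrow> int" where
  "f n = (if n = 0 then 1
          else (-1) ^ (alphaH (THE i. H i \<le> n \<and> n < H (Suc i)) +
                       betaH (THE i. H i \<le> n \<and> n < H (Suc i))))"

definition upper_density :: "nat set \<Rightarrow> ereal" where
  "upper_density A = limsup (\<lambda>N. ereal (real (card (A \<inter> {0..<N})) / real N))"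

definition periodic_seq :: "(nat \<Rightarrow> 'a) \<Rightarrow> bool" where
  "periodic_seq g \<longleftrightarrow> (\<exists>p>0. \<forall>n. g (n + p) = g n)"

end

theory Submission
  imports Defs
begin

lemma ham_infinite: "infinite hamming23"
proof -
  have "range (\<lambda>a::nat. 2 ^ a * 3 ^ 0) \<subseteq> hamming23" unfolding hamming23_def by blast
  moreover have "infinite (range (\<lambda>a::nat. (2::nat) ^ a * 3 ^ 0))"
    by (rule range_inj_infinite) (auto simp: inj_on_def)
  ultimately show ?thesis using infinite_super by blast
qed

lemma H_mono: "strict_mono H"
  unfolding H_def[abs_def] using strict_mono_enumerate[OF ham_infinite] by simp

lemma H_range: "range H = hamming23"
  unfolding H_def[abs_def] using range_enumerate[OF ham_infinite] by simp

lemma mult2: "multiplicity (2::nat) (2 ^ a * 3 ^ b) = a"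
proof (rule multiplicity_decomposeI)
  show "\<not> (2::nat) dvd 3 ^ b"
    by simp
qed auto

lemma mult3: "multiplicity (3::nat) (2 ^ a * 3 ^ b) = b"
proof (rule multiplicity_decomposeI)
  show "(2::nat) ^ a * 3 ^ b = 3 ^ b * 2 ^ a" by simp
  show "\<not> (3::nat) dvd 2 ^ a"
  proof
    assume "(3::nat) dvd 2 ^ a"
    moreover have "coprime (3::nat) (2 ^ a)" using coprime_power_right_iff[of "3::nat" 2 a] by simp
    ultimately have "is_unit (3::nat)" using coprime_common_divisor[of "3::nat" "2^a" 3] by simp
    then show False by simp
  qed
qed auto

lemma f_val:
  assumes "1 \<le> n" "2 ^ a * 3 ^ b \<le> n"
    and "\<And>x. x \<in> hamming23 \<Longrightarrow> x \<le> n \<Longrightarrow> x \<le> 2 ^ a * 3 ^ b"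
  shows "f n = (-1) ^ (a + b)"
proof -
  have "2 ^ a * 3 ^ b \<in> hamming23" unfolding hamming23_def by blast
  then obtain i where hi: "H i = 2 ^ a * 3 ^ b" using H_range by (metis imageE)
  have "H (Suc i) \<in> hamming23" using H_range by blast
  moreover have "H i < H (Suc i)" using H_mono by (simp add: strict_mono_def)
  ultimately have ns: "n < H (Suc i)"
  proof -
    assume a1: "H (Suc i) \<in> hamming23" "H i < H (Suc i)"
    show ?thesis
    proof (rule ccontr)
      assume "\<not> n < H (Suc i)"
      then have "H (Suc i) \<le> n" by simp
      then have "H (Suc i) \<le> H i" using assms(3)[OF a1(1)] hi by simp
      then show False using a1(2) by simp
    qed
  qed
  have "(THE j. H j \<le> n \<and> n < H (Suc j)) = i"
  proof (rule the_equality)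
    show "H i \<le> n \<and> n < H (Suc i)" using hi assms ns by simp
  next
    fix j assume j: "H j \<le> n \<and> n < H (Suc j)"
    show "j = i"
    proof (rule ccontr)
      assume "j \<noteq> i"
      then have "j < i \<or> i < j" by auto
      then show False
      proof
        assume "j < i" then have "Suc j \<le> i" by simp
        then have "H (Suc j) \<le> H i" using H_mono by (simp add: strict_mono_less_eq)
        then show False using j hi assms by simp
      next
        assume "i < j" then have "Suc i \<le> j" by simp
        then have "H (Suc i) \<le> H j" using H_mono by (simp add: strict_mono_less_eq)
        then show False using j ns by simp
      qed
    qed
  qed
  then show ?thesis using assms(1) unfolding f_def alphaH_def betaH_def
    by (simp add: hi mult2 mult3)
qed

lemma max_ham:
  assumes "1 \<le> n"
  obtains a b where "2 ^ a * 3 ^ b \<le> n"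
    "\<And>x. x \<in> hamming23 \<Longrightarrow> x \<le> n \<Longrightarrow> x \<le> 2 ^ a * 3 ^ b"
proof -
  let ?S = "{x \<in> hamming23. x \<le> n}"
  have fin: "finite ?S" by (rule finite_subset[of _ "{..n}"]) auto
  have "1 \<in> ?S" using assms unfolding hamming23_def by (auto intro: exI[of _ 0])
  then have ne: "?S \<noteq> {}" by blast
  have "Max ?S \<in> ?S" using fin ne by (rule Max_in)
  then obtain a b where ab: "Max ?S = 2 ^ a * 3 ^ b" "Max ?S \<le> n" unfolding hamming23_def by auto
  show ?thesis
  proof (rule that)
    show "2 ^ a * 3 ^ b \<le> n" using ab by simp
    fix x assume "x \<in> hamming23" "x \<le> n"
    then have "x \<le> Max ?S" using fin by (intro Max_ge) auto
    then show "x \<le> 2 ^ a * 3 ^ b" using ab by simp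
  qed
qed

lemma flip:
  assumes "3 ^ c \<le> n" "2 * n < 3 ^ (c + 1)"
  shows "f (2 * n) = - f n"
proof -
  have n1: "1 \<le> n" using assms(1) one_le_power[of "3::nat" c] by linarith
  obtain a b where ab: "2 ^ a * 3 ^ b \<le> n"
    "\<And>x. x \<in> hamming23 \<Longrightarrow> x \<le> n \<Longrightarrow> x \<le> 2 ^ a * 3 ^ b" using max_ham[OF n1] by blast
  have fn: "f n = (-1) ^ (a + b)" using f_val[OF n1 ab] .
  have "(3::nat) ^ c = 2 ^ 0 * 3 ^ c" by simp
  then have "(3::nat) ^ c \<in> hamming23" unfolding hamming23_def by blast
  then have c3: "(3::nat) ^ c \<le> 2 ^ a * 3 ^ b"
    using ab(2)[of "3 ^ c"] assms(1) by blast
  have "f (2 * n) = (-1) ^ (Suc a + b)"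
  proof (rule f_val)
    show "1 \<le> 2 * n" using n1 by simp
    show "2 ^ Suc a * 3 ^ b \<le> 2 * n" using ab(1) by simp
    fix x assume x: "x \<in> hamming23" "x \<le> 2 * n"
    then obtain a' b' where xe: "x = 2 ^ a' * 3 ^ b'" unfolding hamming23_def by auto
    show "x \<le> 2 ^ Suc a * 3 ^ b"
    proof (cases a')
      case 0
      have xe0: "x = 3 ^ b'" using 0 xe by simp
      have "(3::nat) ^ b' < 3 ^ Suc c" using x(2) assms(2) xe0 by simp
      then have "b' < Suc c" by (rule power_less_imp_less_exp[rotated]) simp
      then have "b' \<le> c" by simp
      then have "(3::nat) ^ b' \<le> 3 ^ c" by (rule power_increasing) simp
      moreover have "(2::nat) ^ a * 3 ^ b \<le> 2 ^ Suc a * 3 ^ b" by simp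
      ultimately show ?thesis using c3 xe0 by linarith
    next
      case (Suc a'')
      have xe2: "x = 2 * (2 ^ a'' * 3 ^ b')" using xe Suc by simp
      have h1: "2 ^ a'' * 3 ^ b' \<in> hamming23" unfolding hamming23_def by blast
      have h2: "2 ^ a'' * 3 ^ b' \<le> n" using x(2) xe2 by linarith
      have "(2::nat) ^ a'' * 3 ^ b' \<le> 2 ^ a * 3 ^ b" using ab(2)[OF h1 h2] .
      then have "x \<le> 2 * (2 ^ a * 3 ^ b)" using xe2 by linarith
      then show ?thesis by simp
    qed
  qed
  then show ?thesis using fn by simp
qed

lemma f_nz: "f n \<noteq> 0"
  unfolding f_def by simp

theorem proposition4p4:
  shows "\<not> (\<exists>g :: nat \<Rightarrow> int. (\<forall>n. g n \<in> {1, -1}) \<and> periodic_seq g \<and>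
             upper_density {n. f n \<noteq> g n} = 0)"
proof
  assume "\<exists>g :: nat \<Rightarrow> int. (\<forall>n. g n \<in> {1, -1}) \<and> periodic_seq g \<and>
             upper_density {n. f n \<noteq> g n} = 0"
  then obtain g :: "nat \<Rightarrow> int" and p where p: "p > 0" "\<And>n. g (n + p) = g n"
    and ud: "upper_density {n. f n \<noteq> g n} = 0"
    unfolding periodic_seq_def by blast
  define E where "E = {n. f n \<noteq> g n}"
  have gk: "g (k * p) = g 0" for k
  proof (induction k)
    case 0 then show ?case by simp
  next
    case (Suc k)
    have "Suc k * p = k * p + p" by simp
    then have "g (Suc k * p) = g (k * p)" using p(2)[of "k * p"] by (simp only:)
    then show ?case using Suc by simp
  qed
  define eps :: real where "eps = 1 / (48 * p)"
  have epos: "eps > 0" using p by (simp add: eps_def)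
  have "limsup (\<lambda>N. ereal (real (card (E \<inter> {0..<N})) / real N)) < ereal eps"
    using ud epos unfolding upper_density_def E_def by simp
  then have "\<forall>\<^sub>F N in sequentially. ereal (real (card (E \<inter> {0..<N})) / real N) < ereal eps"
    by (rule Limsup_lessD)
  then obtain N0 where N0: "\<And>N. N \<ge> N0 \<Longrightarrow> real (card (E \<inter> {0..<N})) / real N < eps"
    unfolding eventually_sequentially by auto
  define c where "c = N0 + 8 * p + 1"
  define K :: nat where "K = 3 ^ c"
  have "c < 2 ^ c" by (rule less_exp)
  moreover have "(2::nat) ^ c \<le> 3 ^ c" by (simp add: power_mono)
  ultimately have cK: "c < K" unfolding K_def by (rule less_le_trans)
  have K8: "8 * p < K" "N0 \<le> 3 * K" using cK c_def by auto
  define q where "q = K div p"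
  define L where "L = K div (4 * p)"
  define A where "A = (\<lambda>j. p * j) ` {q+1..q+L}"
  have cardA: "card A = L" unfolding A_def using p
    by (subst card_image) (auto simp: inj_on_def)
  define e where "e = card (E \<inter> {0..<3*K})"
  have memA: "n \<in> E \<inter> {0..<3*K} \<or> 2 * n \<in> E \<inter> {0..<3*K}" if nA: "n \<in> A" for n
  proof -
    obtain j where jj: "j \<in> {q+1..q+L}" "n = p * j" using nA unfolding A_def by (rule imageE)
    then have j: "n = p * j" "q + 1 \<le> j" "j \<le> q + L" by simp_all
    have "p * q + K mod p = K" unfolding q_def using mult_div_mod_eq[of p K] .
    moreover have "K mod p < p" using p by simp
    moreover have "p * (q + 1) = p * q + p" by simp
    ultimately have "K < p * (q + 1)" by linarith
    also have "... \<le> p * j" using j(2) by (rule mult_le_mono2)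
    also have "... = n" using j(1) by simp
    finally have Kn: "K < n" .
    have "p * q \<le> K" unfolding q_def using mult_div_mod_eq[of p K] by linarith
    moreover have "4 * p * L \<le> K" unfolding L_def
      using mult_div_mod_eq[of "4 * p" K] by linarith
    moreover have "p * (q + L) = p * q + p * L" by (simp add: distrib_left)
    moreover have "n \<le> p * (q + L)" unfolding j(1) using j(3) by (rule mult_le_mono2)
    ultimately have n2: "2 * n < 3 * K" using Kn by linarith
    have c1: "3 ^ c \<le> n" using Kn unfolding K_def by simp
    have c2: "2 * n < 3 ^ (c + 1)" using n2 unfolding K_def by simp
    have "f (2 * n) = - f n" using flip[OF c1 c2] .
    then have "f (2 * n) \<noteq> f n" using f_nz[of n] by simp
    moreover have "n = j * p" "2 * n = (2 * j) * p" using j by simp_all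
    then have "g n = g 0" "g (2 * n) = g 0" using gk[of j] gk[of "2*j"] by (simp_all only:)
    ultimately have "n \<in> E \<or> 2 * n \<in> E" unfolding E_def by auto
    then show ?thesis using n2 by auto
  qed
  have "A \<subseteq> (E \<inter> {0..<3*K}) \<union> (\<lambda>x. x div 2) ` (E \<inter> {0..<3*K})"
  proof
    fix n assume "n \<in> A"
    then have "n \<in> E \<inter> {0..<3*K} \<or> 2 * n \<in> E \<inter> {0..<3*K}" by (rule memA)
    then show "n \<in> (E \<inter> {0..<3*K}) \<union> (\<lambda>x. x div 2) ` (E \<inter> {0..<3*K})"
    proof
      assume "n \<in> E \<inter> {0..<3*K}" then show ?thesis by (rule UnI1)
    next
      assume h: "2 * n \<in> E \<inter> {0..<3*K}"
      have "n = (2 * n) div 2" by simp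
      then have "n \<in> (\<lambda>x. x div 2) ` (E \<inter> {0..<3*K})" using h by (rule image_eqI)
      then show ?thesis by (rule UnI2)
    qed
  qed
  then have "card A \<le> card (E \<inter> {0..<3*K}) + card ((\<lambda>x. x div 2) ` (E \<inter> {0..<3*K}))"
  proof -
    assume sub: "A \<subseteq> (E \<inter> {0..<3*K}) \<union> (\<lambda>x. x div 2) ` (E \<inter> {0..<3*K})"
    have fi: "finite ((E \<inter> {0..<3*K}) \<union> (\<lambda>x. x div 2) ` (E \<inter> {0..<3*K}))" by simp
    have "card A \<le> card ((E \<inter> {0..<3*K}) \<union> (\<lambda>x. x div 2) ` (E \<inter> {0..<3*K}))"
      using fi sub by (rule card_mono)
    also have "... \<le> card (E \<inter> {0..<3*K}) + card ((\<lambda>x. x div 2) ` (E \<inter> {0..<3*K}))"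
      by (rule card_Un_le)
    finally show ?thesis .
  qed
  also have "... \<le> 2 * e" unfolding e_def using card_image_le[of "E \<inter> {0..<3*K}" "\<lambda>x. x div 2"] by simp
  finally have Le: "L \<le> 2 * e" using cardA by simp
  have "real e / real (3 * K) < eps" unfolding e_def using N0[OF K8(2)] .
  then have e1: "real e < eps * (3 * K)" using K8 by (simp add: divide_less_eq)
  have "4 * p * L + K mod (4 * p) = K" unfolding L_def using mult_div_mod_eq[of "4 * p" K] .
  moreover have "K mod (4 * p) < 4 * p" using p by simp
  moreover have "4 * p * (L + 1) = 4 * p * L + 4 * p" by (simp only: distrib_left mult_1_right)
  ultimately have "K < 4 * p * (L + 1)" by linarith
  then have "real K < real (4 * p * (L + 1))" by (simp only: of_nat_less_iff)
  then have kk: "real K < real (4 * p) * (real L + 1)" by (simp add: distrib_left)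
  have "real L \<le> 2 * real e" using Le by simp
  then have "real L + 1 \<le> 2 * eps * (3 * K) + 1" using e1 by linarith
  then have "real (4 * p) * (real L + 1) \<le> real (4 * p) * (2 * eps * (3 * K) + 1)"
    by (rule mult_left_mono) simp
  then have "real K < real (4 * p) * (2 * eps * (3 * K) + 1)" using kk by linarith
  then have "real K < 4 * real p * (2 * eps * (3 * K) + 1)" by simp
  also have "... = real K / 2 + 4 * real p" using p unfolding eps_def by (simp add: field_simps)
  finally have "real K < 8 * real p" by simp
  then show False using K8 by simp
qed

end
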